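(* Let $\mathcal A$ be the one-dimensional piecewise quadratic collocation matrix (defined in the context) associated with $a<b$, $\gamma\in(0,1)$ and $M\ge2$. Then its $\infty$-norm condition number satisfies $$\kappa_\infty(\mathcal A)=\|\mathcal A\|_\infty\|\mathcal A^{-1}\|_\infty=\mathcal O(M),$$ i.e. there is a constant $C$ depending only on $a,b,\gamma$ such that $\kappa_\infty(\mathcal A)\le CM$ for all $M\ge2$.
   Context: Fix real numbers $a<b$, an exponent $\gamma\in(0,1)$ and an integer $M\ge 2$. Set $h=(b-a)/M$ and $x_s=a+sh$ for $s\in\{0,\tfrac12,1,\tfrac32,\dots,M\}$. The piecewise quadratic Lagrange basis functions on $[a,b]$ are: for integers $0\le l\le M$, $\phi_l(x)=\frac{x-x_{l-1}}{h}\cdot\frac{2x-(x_l+x_{l-1})}{h}$ for $x\in[x_{l-1},x_l]\cap[a,b]$, $\phi_l(x)=\frac{x_{l+1}-x}{h}\cdot\frac{(x_{l+1}+x_l)-2x}{h}$ for $x\in[x_l,x_{l+1}]\cap[a,b]$, and $\phi_l(x)=0$ otherwise; and for $l=1,\dots,M$, $\phi_{l-\frac12}(x)=\frac{4(x-x_{l-1})(x_l-x)}{h^2}$ for $x\in[x_{l-1},x_l]$ and $0$ otherwise. For $i\in\{1,\dots,2M-1\}$ and $j\in\{0,1,\dots,2M\}$ define $$d_i=\int_a^b\frac{dy}{|x_{i/2}-y|^{\gamma}},\qquad g_{ij}=\int_a^b\frac{\phi_{j/2}(y)}{|x_{i/2}-y|^{\gamma}}\,dy .$$ The one-dimensional collocation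 matrix is the $(2M-1)\times(2M-1)$ matrix $\mathcal A$ with entries $A_{ij}=\delta_{ij}d_i-g_{ij}$, $i,j\in\{1,\dots,2M-1\}$. The following fact, established in earlier work, may be used: $g_{ij}>0$ for all $i,j\in\{1,\dots,2M-1\}$, and $\mathcal A$ is strictly diagonally dominant by rows (in particular invertible). $\|\cdot\|_\infty$ denotes the matrix norm induced by the maximum norm. *)

theory Defs
  imports "HOL-Analysis.Analysis" "Jordan_Normal_Form.Matrix"
begin

text \<open>Grid points with doubled index: xgrid a b M k = x_(k/2) = a + (k/2) h, h = (b-a)/M.\<close>
definition xgrid :: "real \<Rightarrow> real \<Rightarrow> nat \<Rightarrow> nat \<Rightarrow> real" where
  "xgrid a b M k = a + (real k / 2) * ((b - a) / real M)"

text \<open>Piecewise quadratic Lagrange basis function phi_(j/2), doubled index j.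
  Even j = 2l: nodal function phi_l; odd j = 2l-1: midpoint function phi_(l-1/2).\<close>
definition phi :: "real \<Rightarrow> real \<Rightarrow> nat \<Rightarrow> nat \<Rightarrow> real \<Rightarrow> real" where
  "phi a b M j x =
    (let h = (b - a) / real M; X = xgrid a b M in
     if even j then
       (let l = j div 2 in
        if 1 \<le> l \<and> X (2*l - 2) \<le> x \<and> x \<le> X (2*l) \<and> a \<le> x \<and> x \<le> b then
          (x - X (2*l - 2)) / h * ((2*x - (X (2*l) + X (2*l - 2))) / h)
        else if l < M \<and> X (2*l) \<le> x \<and> x \<le> X (2*l + 2) \<and> a \<le> x \<and> x \<le> b then
          (X (2*l + 2) - x) / h * (((X (2*l + 2) + X (2*l)) - 2*x) / h)
        else 0)
     else
       (let l = (j + 1) div 2 in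
        if X (2*l - 2) \<le> x \<and> x \<le> X (2*l) then
          4 * (x - X (2*l - 2)) * (X (2*l) - x) / h^2
        else 0))"

definition dcoef :: "real \<Rightarrow> real \<Rightarrow> real \<Rightarrow> nat \<Rightarrow> nat \<Rightarrow> real" where
  "dcoef a b \<gamma> M i = integral {a..b} (\<lambda>y. 1 / \<bar>xgrid a b M i - y\<bar> powr \<gamma>)"

definition gcoef :: "real \<Rightarrow> real \<Rightarrow> real \<Rightarrow> nat \<Rightarrow> nat \<Rightarrow> nat \<Rightarrow> real" where
  "gcoef a b \<gamma> M i j = integral {a..b} (\<lambda>y. phi a b M j y / \<bar>xgrid a b M i - y\<bar> powr \<gamma>)"

text \<open>Collocation matrix, (2M-1)x(2M-1); row/column r (0-based) corresponds to index r+1.\<close>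
definition colloc_mat :: "real \<Rightarrow> real \<Rightarrow> real \<Rightarrow> nat \<Rightarrow> real mat" where
  "colloc_mat a b \<gamma> M = mat (2*M - 1) (2*M - 1)
     (\<lambda>(r, c). (if r = c then dcoef a b \<gamma> M (r+1) else 0) - gcoef a b \<gamma> M (r+1) (c+1))"

definition norm_inf_mat :: "real mat \<Rightarrow> real" where
  "norm_inf_mat A = Max {(\<Sum>c<dim_col A. \<bar>A $$ (r, c)\<bar>) | r. r < dim_row A}"

definition inverse_mat :: "real mat \<Rightarrow> real mat" where
  "inverse_mat A = (SOME B. B \<in> carrier_mat (dim_row A) (dim_row A) \<and> A * B = 1\<^sub>m (dim_row A)
                        \<and> B * A = 1\<^sub>m (dim_row A))"

definition cond_inf :: "real mat \<Rightarrow> real" where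
  "cond_inf A = norm_inf_mat A * norm_inf_mat (inverse_mat A)"

end

theory Submission
  imports Defs "Jordan_Normal_Form.Determinant"
begin

unbundle no vec_syntax

lemma powr_split1: "0 < (d::real) \<Longrightarrow> d powr \<gamma> = d * d powr (\<gamma> - 1)"
proof -
  assume d: "0 < d"
  have "d * d powr (\<gamma> - 1) = d powr 1 * d powr (\<gamma> - 1)" using d by simp
  also have "\<dots> = d powr (1 + (\<gamma> - 1))" by (rule powr_add[symmetric])
  finally show ?thesis by simp
qed

lemma ratio_mono:
  fixes u c d1 d2 \<gamma> :: real
  assumes "0 < d2" "d2 \<le> d1" "\<gamma> < 1" "0 \<le> u" "0 \<le> c" "u * d1 \<le> c * d2"
  shows "u * d1 powr \<gamma> \<le> c * d2 powr \<gamma>"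
proof -
  have d1: "0 < d1" using assms by linarith
  have m: "d1 powr (\<gamma> - 1) \<le> d2 powr (\<gamma> - 1)"
    using assms(1,2,3) by (intro powr_mono2') auto
  have e1: "u * d1 powr \<gamma> = (u * d1) * d1 powr (\<gamma> - 1)" 
    unfolding powr_split1[OF d1, of \<gamma>] by (rule mult.assoc[symmetric])
  have "(u * d1) * d1 powr (\<gamma> - 1) \<le> (c * d2) * d1 powr (\<gamma> - 1)" 
    using assms(6) by (rule mult_right_mono) simp
  also have "\<dots> \<le> (c * d2) * d2 powr (\<gamma> - 1)" 
    using m by (rule mult_left_mono) (use assms in simp)
  also have "\<dots> = c * d2 powr \<gamma>" 
    unfolding powr_split1[OF assms(1), of \<gamma>] by (rule mult.assoc)
  finally show ?thesis by (subst e1)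
qed

lemma pw_core:
  fixes u v \<gamma> :: real
  assumes u: "0 \<le> u" "u \<le> 1/2" and v: "v \<le> 0 \<or> v = 1/2 \<or> v \<ge> 1" and g: "0 < \<gamma>" "\<gamma> < 1"
  shows "u * (1 / \<bar>v - 1 + u\<bar> powr \<gamma>) \<le> (1 - u) * (1 / \<bar>v - u\<bar> powr \<gamma>)"
proof (cases "u = 0")
  case True then show ?thesis by simp
next
  case False
  then have up: "u > 0" using u by simp
  consider "v \<le> 0" | "v = 1/2" | "v \<ge> 1" using v by blast
  then show ?thesis
  proof cases
    case 1
    have e1: "\<bar>v - u\<bar> = u - v" "\<bar>v - 1 + u\<bar> = 1 - u - v" using 1 u by auto
    have "(1 - u - v) powr \<gamma> \<ge> (u - v) powr \<gamma>" using 1 u g by (intro powr_mono2) auto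
    moreover have "(u - v) powr \<gamma> > 0" using 1 up by simp
    moreover have "(1 - u - v) powr \<gamma> > 0" using 1 u by simp
    ultimately have "1 / (1 - u - v) powr \<gamma> \<le> 1 / (u - v) powr \<gamma>"
      by (intro divide_left_mono) auto
    then have "u * (1 / (1 - u - v) powr \<gamma>) \<le> u * (1 / (u - v) powr \<gamma>)"
      using up by (intro mult_left_mono) auto
    also have "\<dots> \<le> (1 - u) * (1 / (u - v) powr \<gamma>)"
      using u by (intro mult_right_mono) auto
    finally show ?thesis using e1 by simp
  next
    case 2
    have eq: "\<bar>v - 1 + u\<bar> = \<bar>v - u\<bar>" using 2 u by auto
    have X: "1/\<bar>v-u\<bar> powr \<gamma> \<ge> 0" by simp
    show ?thesis unfolding eq using mult_right_mono[OF _ X, of u "1-u"] u by simp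
  next
    case 3
    define d1 where "d1 = v - u"
    define d2 where "d2 = v - 1 + u"
    have e: "\<bar>v - u\<bar> = d1" "\<bar>v - 1 + u\<bar> = d2" using 3 u by (auto simp: d1_def d2_def)
    have d1p: "d1 > 0" using 3 u by (simp add: d1_def)
    show ?thesis
    proof (cases "d2 = 0")
      case True then show ?thesis using e u by simp
    next
      case False
      then have d2p: "d2 > 0" using 3 up by (simp add: d2_def)
      have key: "u * d1 \<le> (1 - u) * d2"
      proof -
        have "(1 - u) * d2 - u * d1 = (1 - 2*u) * (v - 1)" by (simp add: d1_def d2_def algebra_simps)
        moreover have "(1 - 2*u) * (v - 1) \<ge> 0" using u 3 by simp
        ultimately show ?thesis by linarith
      qed
      have "u * d1 powr \<gamma> \<le> (1 - u) * d2 powr \<gamma>"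
        by (rule ratio_mono[OF d2p _ g(2)]) (use u key in \<open>auto simp: d1_def d2_def\<close>)
      then have "u / d2 powr \<gamma> \<le> (1 - u) / d1 powr \<gamma>"
        using d1p d2p by (simp add: field_simps)
      then show ?thesis using e by simp
    qed
  qed
qed

definition theta :: "real \<Rightarrow> real" where "theta \<gamma> = (5/7) powr (1 - \<gamma>)"

lemma theta_bounds: "0 < \<gamma> \<Longrightarrow> \<gamma> < 1 \<Longrightarrow> 2/3 \<le> theta \<gamma> \<and> theta \<gamma> < 1"
proof -
  assume g: "0 < \<gamma>" "\<gamma> < 1"
  have "(5/7::real) powr 1 \<le> (5/7) powr (1 - \<gamma>)" using g by (intro powr_mono') auto
  moreover have "(5/7::real) powr (1 - \<gamma>) < 1 powr (1 - \<gamma>)" using g by (intro powr_less_mono2) auto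
  ultimately show ?thesis unfolding theta_def by simp
qed

lemma pw_quant:
  fixes u v \<gamma> :: real
  assumes u: "0 \<le> u" "u \<le> 1/4" and v: "v \<ge> 1" and g: "0 < \<gamma>" "\<gamma> < 1"
  shows "u * (1 / \<bar>v - 1 + u\<bar> powr \<gamma>) \<le> theta \<gamma> * ((1 - u) * (1 / \<bar>v - u\<bar> powr \<gamma>))"
proof (cases "u = 0")
  case True then show ?thesis using theta_bounds[OF g] by simp
next
  case False
  then have up: "u > 0" using u by simp
  define d1 where "d1 = v - u"
  define d2 where "d2 = v - 1 + u"
  have e: "\<bar>v - u\<bar> = d1" "\<bar>v - 1 + u\<bar> = d2" using v u by (auto simp: d1_def d2_def)
  have d1p: "d1 > 0" "d2 > 0" "d2 \<le> d1" using v u up by (auto simp: d1_def d2_def)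
  have th: "2/3 \<le> theta \<gamma>" "theta \<gamma> < 1" using theta_bounds[OF g] by auto
  have main: "u * d1 powr \<gamma> \<le> theta \<gamma> * (1 - u) * d2 powr \<gamma>"
  proof (cases "v \<ge> 2")
    case True
    have "u * d1 \<le> (2/3 * (1 - u)) * d2"
    proof -
      have "(2/3 * (1 - u)) * d2 - u * d1 = (2/3)*(1-u)*(v-1+u) - u*(v-u)"
        by (simp add: d1_def d2_def)
      moreover have "(2/3)*(1-u)*(v-1+u) - u*(v-u) \<ge> 0"
      proof -
        have "(2/3)*(1-u)*(v-1+u) - u*(v-u) = (v - 2) * (2/3 - 5/3*u) + (2/3 - 2*u + u*u/3)"
          by (simp add: field_simps)
        moreover have "(v - 2) * (2/3 - 5/3*u) \<ge> 0" using True u by simp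
        moreover have "2/3 - 2*u + u*u/3 \<ge> 0"
        proof -
          have "u*u \<ge> 0" by simp
          then show ?thesis using u by linarith
        qed
        ultimately show ?thesis by linarith
      qed
      ultimately show ?thesis by linarith
    qed
    then have "u * d1 powr \<gamma> \<le> (2/3 * (1 - u)) * d2 powr \<gamma>"
      by (intro ratio_mono[OF d1p(2) d1p(3) g(2)]) (use u in auto)
    also have "\<dots> \<le> theta \<gamma> * (1 - u) * d2 powr \<gamma>"
      using th u by (intro mult_right_mono) auto
    finally show ?thesis .
  next
    case False
    have key: "u * d1 \<le> (1 - u) * d2"
    proof -
      have "(1 - u) * d2 - u * d1 = (1 - 2*u) * (v - 1)" by (simp add: d1_def d2_def algebra_simps)
      moreover have "(1 - 2*u) * (v - 1) \<ge> 0" using u v by simp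
      ultimately show ?thesis by linarith
    qed
    have r: "d2 / d1 \<le> 5/7" using False u d1p by (simp add: divide_simps d1_def d2_def)
    have "u * d1 powr \<gamma> = (u * d1) * d1 powr (\<gamma> - 1)" using powr_split1[OF d1p(1), of \<gamma>] by simp
    also have "\<dots> \<le> ((1 - u) * d2) * d1 powr (\<gamma> - 1)" using key d1p by (intro mult_right_mono) auto
    also have "\<dots> = (1 - u) * d2 powr \<gamma> * (d2 / d1) powr (1 - \<gamma>)"
    proof -
      have "d2 powr \<gamma> * (d2 / d1) powr (1 - \<gamma>) = (d2 powr \<gamma> * d2 powr (1 - \<gamma>)) / d1 powr (1 - \<gamma>)"
        using d1p by (simp add: powr_divide)
      also have "d2 powr \<gamma> * d2 powr (1 - \<gamma>) = d2"
        using d1p by (simp add: powr_add[symmetric])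
      also have "d1 powr (1 - \<gamma>) = 1 / d1 powr (\<gamma> - 1)"
        using powr_minus_divide[of d1 "\<gamma> - 1"] by simp
      finally have "d2 * d1 powr (\<gamma> - 1) = d2 powr \<gamma> * (d2 / d1) powr (1 - \<gamma>)"
        by simp
      then show ?thesis by (simp add: mult.assoc)
    qed
    also have "\<dots> \<le> (1 - u) * d2 powr \<gamma> * theta \<gamma>"
      unfolding theta_def using r d1p u g by (intro mult_left_mono powr_mono2) auto
    finally show ?thesis by (simp add: algebra_simps)
  qed
  then have "u / d2 powr \<gamma> \<le> theta \<gamma> * (1 - u) / d1 powr \<gamma>"
    using d1p by (simp add: field_simps)
  then show ?thesis using e by simp
qed


definition qf :: "real \<Rightarrow> real" where "qf u = (1-u)*(1-2*u)"
definition Wg :: "real \<Rightarrow> real \<Rightarrow> real" where "Wg \<gamma> t = 1 / \<bar>t\<bar> powr \<gamma>"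

lemma Wg_nonneg: "Wg \<gamma> t \<ge> 0" by (simp add: Wg_def)

lemma Wg_mult: "Wg \<gamma> (t * s) = Wg \<gamma> t * Wg \<gamma> s"
  by (simp add: Wg_def abs_mult powr_mult)

lemma S_half:
  fixes u v \<gamma> :: real
  assumes u: "0 \<le> u" "u \<le> 1/2" and v: "v \<le> 0 \<or> v = 1/2 \<or> v \<ge> 1" and g: "0 < \<gamma>" "\<gamma> < 1"
  shows "qf u * Wg \<gamma> (v - u) + qf (1 - u) * Wg \<gamma> (v - (1 - u))
          = (1 - 2*u) * ((1 - u) * Wg \<gamma> (v - u) - u * Wg \<gamma> (v - 1 + u))"
  by (simp add: qf_def algebra_simps)

lemma S_nonneg:
  fixes u v \<gamma> :: real
  assumes u: "0 \<le> u" "u \<le> 1" and v: "v \<le> 0 \<or> v = 1/2 \<or> v \<ge> 1" and g: "0 < \<gamma>" "\<gamma> < 1"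
  shows "qf u * Wg \<gamma> (v - u) + qf (1 - u) * Wg \<gamma> (v - (1 - u)) \<ge> 0"
proof -
  have *: "qf w * Wg \<gamma> (v - w) + qf (1 - w) * Wg \<gamma> (v - (1 - w)) \<ge> 0"
    if w: "0 \<le> w" "w \<le> 1/2" for w
  proof -
    have "w * Wg \<gamma> (v - 1 + w) \<le> (1 - w) * Wg \<gamma> (v - w)"
      using pw_core[OF w v g] by (simp add: Wg_def)
    then show ?thesis unfolding S_half[OF w v g] using w by simp
  qed
  show ?thesis
  proof (cases "u \<le> 1/2")
    case True then show ?thesis using * u by simp
  next
    case False
    have "qf (1-u) * Wg \<gamma> (v - (1-u)) + qf u * Wg \<gamma> (v - u) \<ge> 0"
      using *[of "1-u"] False u by simp
    then show ?thesis by linarith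
  qed
qed

lemma S_quant:
  fixes u v \<gamma> V :: real
  assumes u: "0 \<le> u" "u \<le> 1/4" and v: "1 \<le> v" "v \<le> V" and g: "0 < \<gamma>" "\<gamma> < 1"
  shows "qf u * Wg \<gamma> (v - u) + qf (1 - u) * Wg \<gamma> (v - (1 - u)) \<ge> 3/8 * (1 - theta \<gamma>) * Wg \<gamma> V"
proof -
  have u2: "0 \<le> u" "u \<le> 1/2" using u by auto
  have vc: "v \<le> 0 \<or> v = 1/2 \<or> v \<ge> 1" using v by auto
  have th: "theta \<gamma> < 1" using theta_bounds[OF g] by auto
  have q: "u * Wg \<gamma> (v - 1 + u) \<le> theta \<gamma> * ((1 - u) * Wg \<gamma> (v - u))"
    using pw_quant[OF u v(1) g] by (simp add: Wg_def)
  have W1: "Wg \<gamma> V \<le> Wg \<gamma> (v - u)"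
  proof -
    have "(v - u) powr \<gamma> \<le> V powr \<gamma>" using u v g by (intro powr_mono2) auto
    moreover have "(v - u) powr \<gamma> > 0" using u v by simp
    moreover have "V powr \<gamma> > 0" using u v by simp
    ultimately have "1 / V powr \<gamma> \<le> 1 / (v - u) powr \<gamma>" by (intro divide_left_mono) auto
    then show ?thesis using u v by (simp add: Wg_def)
  qed
  have "(1 - 2*u) * ((1 - u) * Wg \<gamma> (v - u) - u * Wg \<gamma> (v - 1 + u))
        \<ge> (1 - 2*u) * ((1 - theta \<gamma>) * ((1 - u) * Wg \<gamma> (v - u)))"
    using q u by (intro mult_left_mono) (auto simp: algebra_simps)
  moreover have "(1 - 2*u) * ((1 - theta \<gamma>) * ((1 - u) * Wg \<gamma> (v - u)))
        \<ge> (1/2) * ((1 - theta \<gamma>) * ((3/4) * Wg \<gamma> V))"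
  proof -
    have a: "(3/4) * Wg \<gamma> V \<le> (1 - u) * Wg \<gamma> (v - u)"
      using W1 u Wg_nonneg[of \<gamma> V] by (intro mult_mono) auto
    have b: "(1 - theta \<gamma>) * ((3/4) * Wg \<gamma> V) \<le> (1 - theta \<gamma>) * ((1 - u) * Wg \<gamma> (v - u))"
      using a th by (intro mult_left_mono) auto
    have c: "0 \<le> (1 - theta \<gamma>) * ((3/4) * Wg \<gamma> V)"
      using th Wg_nonneg[of \<gamma> V] by (intro mult_nonneg_nonneg) auto
    have d: "(1/2::real) \<le> 1 - 2*u" "0 \<le> 1 - 2*u" using u by auto
    show ?thesis by (rule mult_mono[OF d(1) b d(2) c])
  qed
  moreover have "(1/2) * ((1 - theta \<gamma>) * ((3/4) * Wg \<gamma> V)) = 3/8 * (1 - theta \<gamma>) * Wg \<gamma> V"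
    by simp
  ultimately show ?thesis unfolding S_half[OF u2 vc g] by linarith
qed

lemma has_integral_reflect_Icc:
  fixes f :: "real \<Rightarrow> real"
  assumes "(f has_integral I) {\<alpha>..\<beta>}"
  shows "((\<lambda>y. f (\<alpha> + \<beta> - y)) has_integral I) {\<alpha>..\<beta>}"
proof -
  have "((f \<circ> (+) (\<alpha>+\<beta>)) has_integral I) {-\<beta>..-\<alpha>}"
    using has_integral_shift_Icc_real[of f "\<alpha>+\<beta>" I "-\<beta>" "-\<alpha>"] assms by simp
  then have "((\<lambda>x. (f \<circ> (+) (\<alpha>+\<beta>)) (-x)) has_integral I) {- (-\<alpha>)..- (-\<beta>)}"
    using has_integral_reflect_real[of "f \<circ> (+) (\<alpha>+\<beta>)" I "-\<alpha>" "-\<beta>"] by simp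
  then show ?thesis by (simp add: o_def)
qed


lemma half_setup:
  fixes e0 s v x \<gamma> y :: real
  assumes s: "s \<noteq> 0" and x: "x = e0 + v * s"
    and y: "y \<in> {min e0 (e0+s)..max e0 (e0+s)}"
  shows "0 \<le> (y - e0) / s \<and> (y - e0) / s \<le> 1
     \<and> (min e0 (e0+s) + max e0 (e0+s) - y - e0) / s = 1 - (y - e0) / s
     \<and> x - y = (v - (y - e0) / s) * s
     \<and> x - (min e0 (e0+s) + max e0 (e0+s) - y) = (v - (1 - (y - e0) / s)) * s
     \<and> min e0 (e0+s) + max e0 (e0+s) - y \<in> {min e0 (e0+s)..max e0 (e0+s)}"
proof -
  have mm: "min e0 (e0+s) + max e0 (e0+s) = 2*e0 + s" by (simp add: min_def max_def)
  have u: "0 \<le> (y - e0) / s \<and> (y - e0) / s \<le> 1"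
  proof (cases "s > 0")
    case True then show ?thesis using y by (auto simp: divide_simps min_def max_def)
  next
    case False then have "s < 0" using s by simp
    then show ?thesis using y by (auto simp: divide_simps min_def max_def)
  qed
  show ?thesis using u s y unfolding mm x by (auto simp: field_simps min_def max_def split: if_splits)
qed


lemma half_sym:
  fixes e0 s v x \<gamma> :: real and G :: "real \<Rightarrow> real"
  assumes s: "s \<noteq> 0" and x: "x = e0 + v * s"
    and int: "G integrable_on {min e0 (e0+s)..max e0 (e0+s)}"
    and G: "\<forall>y\<in>{min e0 (e0+s)..max e0 (e0+s)}. G y = qf ((y - e0) / s) * Wg \<gamma> (x - y)"
  shows "((\<lambda>y. G y + G (min e0 (e0+s) + max e0 (e0+s) - y)) has_integral
            2 * integral {min e0 (e0+s)..max e0 (e0+s)} G) {min e0 (e0+s)..max e0 (e0+s)}"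
    and "\<And>y. y \<in> {min e0 (e0+s)..max e0 (e0+s)} \<Longrightarrow>
          G y + G (min e0 (e0+s) + max e0 (e0+s) - y)
          = Wg \<gamma> s * (qf ((y - e0) / s) * Wg \<gamma> (v - (y - e0) / s)
                 + qf (1 - (y - e0) / s) * Wg \<gamma> (v - (1 - (y - e0) / s)))"
proof -
  let ?lo = "min e0 (e0+s)" and ?hi = "max e0 (e0+s)"
  have h1: "(G has_integral integral {?lo..?hi} G) {?lo..?hi}" using int by (simp add: integrable_integral)
  have h2: "((\<lambda>y. G (?lo + ?hi - y)) has_integral integral {?lo..?hi} G) {?lo..?hi}"
    by (rule has_integral_reflect_Icc[OF h1])
  show "((\<lambda>y. G y + G (?lo + ?hi - y)) has_integral 2 * integral {?lo..?hi} G) {?lo..?hi}"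
    using has_integral_add[OF h1 h2] unfolding mult_2 .
next
  fix y assume y: "y \<in> {min e0 (e0+s)..max e0 (e0+s)}"
  define u where "u = (y - e0) / s"
  define y' where "y' = min e0 (e0+s) + max e0 (e0+s) - y"
  have hs: "(y' - e0) / s = 1 - u" "x - y = (v - u) * s" "x - y' = (v - (1 - u)) * s"
      "y' \<in> {min e0 (e0+s)..max e0 (e0+s)}"
    using half_setup[OF s x y] unfolding u_def y'_def by auto
  have "G y = qf u * Wg \<gamma> (x - y)" using bspec[OF G y] unfolding u_def .
  also have "\<dots> = qf u * (Wg \<gamma> (v - u) * Wg \<gamma> s)" unfolding hs(2) Wg_mult ..
  finally have 1: "G y = qf u * (Wg \<gamma> (v - u) * Wg \<gamma> s)" .
  have "G y' = qf ((y' - e0) / s) * Wg \<gamma> (x - y')" using bspec[OF G hs(4)] .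
  also have "\<dots> = qf (1 - u) * (Wg \<gamma> (v - (1 - u)) * Wg \<gamma> s)" unfolding hs(1) hs(3) Wg_mult ..
  finally have 2: "G y' = qf (1 - u) * (Wg \<gamma> (v - (1 - u)) * Wg \<gamma> s)" .
  show "G y + G (min e0 (e0+s) + max e0 (e0+s) - y)
          = Wg \<gamma> s * (qf ((y - e0) / s) * Wg \<gamma> (v - (y - e0) / s)
                 + qf (1 - (y - e0) / s) * Wg \<gamma> (v - (1 - (y - e0) / s)))"
    using 1 2 unfolding u_def[symmetric] y'_def[symmetric] by (simp add: algebra_simps)
qed


lemma half_nonneg:
  fixes e0 s v x \<gamma> :: real and G :: "real \<Rightarrow> real"
  assumes s: "s \<noteq> 0" and x: "x = e0 + v * s" and v: "v \<le> 0 \<or> v = 1/2 \<or> v \<ge> 1"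
    and g: "0 < \<gamma>" "\<gamma> < 1"
    and int: "G integrable_on {min e0 (e0+s)..max e0 (e0+s)}"
    and G: "\<forall>y\<in>{min e0 (e0+s)..max e0 (e0+s)}. G y = qf ((y - e0) / s) * Wg \<gamma> (x - y)"
  shows "integral {min e0 (e0+s)..max e0 (e0+s)} G \<ge> 0"
proof -
  note hs = half_sym[OF s x int G]
  have "0 \<le> 2 * integral {min e0 (e0+s)..max e0 (e0+s)} G"
  proof (rule has_integral_nonneg[OF hs(1)])
    fix y assume y: "y \<in> {min e0 (e0+s)..max e0 (e0+s)}"
    have "0 \<le> (y - e0) / s" "(y - e0) / s \<le> 1" using half_setup[OF s x y] by auto
    from S_nonneg[OF this v g] show "0 \<le> G y + G (min e0 (e0+s) + max e0 (e0+s) - y)"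
      unfolding hs(2)[OF y] using Wg_nonneg by simp
  qed
  then show ?thesis by simp
qed

lemma half_lower:
  fixes e0 s v x \<gamma> V :: real and G :: "real \<Rightarrow> real"
  assumes s: "s \<noteq> 0" and x: "x = e0 + v * s" and v: "1 \<le> v" "v \<le> V"
    and g: "0 < \<gamma>" "\<gamma> < 1"
    and int: "G integrable_on {min e0 (e0+s)..max e0 (e0+s)}"
    and G: "\<forall>y\<in>{min e0 (e0+s)..max e0 (e0+s)}. G y = qf ((y - e0) / s) * Wg \<gamma> (x - y)"
  shows "integral {min e0 (e0+s)..max e0 (e0+s)} G \<ge> 3/64 * (1 - theta \<gamma>) * \<bar>s\<bar> * Wg \<gamma> s * Wg \<gamma> V"
proof -
  let ?lo = "min e0 (e0+s)" and ?hi = "max e0 (e0+s)"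
  let ?H = "\<lambda>y. G y + G (?lo + ?hi - y)"
  let ?K = "Wg \<gamma> s * (3/8 * (1 - theta \<gamma>) * Wg \<gamma> V)"
  let ?a = "min e0 (e0+s/4)" and ?b = "max e0 (e0+s/4)"
  note hs = half_sym[OF s x int G]
  have vc: "v \<le> 0 \<or> v = 1/2 \<or> v \<ge> 1" using v by auto
  have Hint: "?H integrable_on {?lo..?hi}" using has_integral_integrable[OF hs(1)] .
  have Hnn: "\<forall>y\<in>{?lo..?hi}. 0 \<le> ?H y"
  proof
    fix y assume y: "y \<in> {?lo..?hi}"
    have "0 \<le> (y - e0) / s" "(y - e0) / s \<le> 1" using half_setup[OF s x y] by auto
    from S_nonneg[OF this vc g] show "0 \<le> ?H y"
      unfolding hs(2)[OF y] using Wg_nonneg by simp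
  qed
  have sub: "{?a..?b} \<subseteq> {?lo..?hi}" by (auto simp: min_def max_def)
  have Hint2: "?H integrable_on {?a..?b}"
    by (rule integrable_on_subinterval[OF Hint sub])
  have "integral {?a..?b} ?H \<le> integral {?lo..?hi} ?H"
    by (rule integral_subset_le[OF sub Hint2 Hint Hnn])
  moreover have "integral {?a..?b} (\<lambda>y. ?K) \<le> integral {?a..?b} ?H"
  proof (rule integral_le)
    show "(\<lambda>y. ?K) integrable_on {?a..?b}" by (rule integrable_const_ivl)
    show "?H integrable_on {?a..?b}" by (rule Hint2)
    fix y assume y: "y \<in> {?a..?b}"
    then have y': "y \<in> {?lo..?hi}" using sub by auto
    have u: "0 \<le> (y - e0) / s" "(y - e0) / s \<le> 1/4"
    proof -
      show "0 \<le> (y - e0) / s" using half_setup[OF s x y'] by auto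
      show "(y - e0) / s \<le> 1/4"
      proof (cases "s > 0")
        case True then show ?thesis using y by (auto simp: divide_simps min_def max_def)
      next
        case False then have "s < 0" using s by simp
        then show ?thesis using y by (auto simp: divide_simps min_def max_def)
      qed
    qed
    from S_quant[OF u v g]
    show "?K \<le> ?H y" unfolding hs(2)[OF y'] using Wg_nonneg[of \<gamma> s] by (intro mult_left_mono) auto
  qed
  moreover have "integral {?a..?b} (\<lambda>y. ?K) = \<bar>s\<bar>/4 * ?K"
    by (simp add: min_def max_def abs_if)
  moreover have "integral {?lo..?hi} ?H = 2 * integral {?lo..?hi} G"
    using hs(1) by (rule integral_unique)
  ultimately have "\<bar>s\<bar>/4 * ?K \<le> 2 * integral {?lo..?hi} G" by linarith
  then show ?thesis by (simp add: algebra_simps)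
qed


definition Nf :: "real \<Rightarrow> real" where "Nf s = (if \<bar>s\<bar> \<le> 1 then (1 - \<bar>s\<bar>)*(1 - 2*\<bar>s\<bar>) else 0)"
definition Bf :: "real \<Rightarrow> real" where "Bf z = (if \<bar>z\<bar> \<le> 1/2 then (1 - 2 * z) * (1 + 2 * z) else 0)"
definition Ref :: "nat \<Rightarrow> real \<Rightarrow> real" where
  "Ref j t = (if even j then Nf (t - real j / 2) else Bf (t - real j / 2))"

lemma Nf_zero: "\<bar>s\<bar> \<ge> 1 \<Longrightarrow> Nf s = 0" by (auto simp: Nf_def)
lemma Bf_zero: "\<bar>s\<bar> \<ge> 1/2 \<Longrightarrow> Bf s = 0" by (auto simp: Bf_def abs_if)
lemma Nf_qf: "\<bar>s\<bar> \<le> 1 \<Longrightarrow> Nf s = qf \<bar>s\<bar>" by (simp add: Nf_def qf_def)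
lemma Bf_nonneg: "Bf s \<ge> 0" by (auto simp: Bf_def abs_if intro!: mult_nonneg_nonneg)

lemma Nf_bound: "\<bar>Nf s\<bar> \<le> 1"
proof (cases "\<bar>s\<bar> \<le> 1")
  case True
  define a where "a = \<bar>s\<bar>"
  have a: "0 \<le> a" "a \<le> 1" using True by (auto simp: a_def)
  have e: "(1 - a)*(1 - 2*a) = 1 - 3*a + 2*(a*a)" by (simp add: algebra_simps)
  have "a*a \<le> a" using a by (simp add: mult_le_one mult_left_le)
  moreover have "a*a \<ge> 0" by simp
  moreover have "0 \<le> (a - 3/4)*(a - 3/4)" by simp
  moreover have "(a - 3/4)*(a - 3/4) = a*a - 3/2*a + 9/16" by (simp add: algebra_simps)
  ultimately have "\<bar>(1 - a)*(1 - 2*a)\<bar> \<le> 1" unfolding e using a by (simp add: abs_le_iff)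
  then show ?thesis using True by (simp add: Nf_def a_def)
qed (simp add: Nf_def)

lemma Bf_bound: "\<bar>Bf z\<bar> \<le> 1"
proof (cases "\<bar>z\<bar> \<le> 1/2")
  case True
  have e: "(1 - 2 * z) * (1 + 2 * z) = 1 - 4 * (z * z)" by (simp add: algebra_simps)
  have "z * z \<le> 1/4"
  proof -
    have "z * z = \<bar>z\<bar> * \<bar>z\<bar>" by simp
    also have "\<dots> \<le> (1/2) * (1/2)" using True by (intro mult_mono) auto
    finally show ?thesis by simp
  qed
  moreover have "z * z \<ge> 0" by simp
  ultimately show ?thesis using True unfolding Bf_def e by (simp add: abs_le_iff)
qed (simp add: Bf_def)

lemma Ref_bound: "\<bar>Ref j t\<bar> \<le> 1" by (simp add: Ref_def Nf_bound Bf_bound)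

lemma Ref_odd_nonneg: "odd j \<Longrightarrow> Ref j t \<ge> 0" by (simp add: Ref_def Bf_nonneg)

lemma Ref_PU:
  assumes M: "M \<ge> 1" and t: "0 \<le> t" "t \<le> real M"
  shows "(\<Sum>j\<le>2*M. Ref j t) = 1"
proof -
  obtain k :: nat where k: "k < M" "real k \<le> t" "t \<le> real k + 1"
  proof (cases "t < real M")
    case True
    define k where "k = nat \<lfloor>t\<rfloor>"
    have "real k = of_int \<lfloor>t\<rfloor>" using t by (simp add: k_def)
    then have "real k \<le> t" "t < real k + 1" by linarith+
    moreover have "k < M" using True \<open>real k \<le> t\<close> by linarith
    ultimately show ?thesis using that by auto
  next
    case False
    then show ?thesis using that[of "M - 1"] M t by (auto simp: of_nat_diff)
  qed
  let ?S = "{2*k, 2*k+1, 2*k+2}"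
  have sub: "?S \<subseteq> {..2*M}" using k by auto
  have zero: "Ref j t = 0" if j: "j \<in> {..2*M} - ?S" for j
  proof (cases "even j")
    case True
    then obtain l where l: "j = 2*l" by (auto elim: evenE)
    have "l \<noteq> k" "l \<noteq> k+1" using j l by auto
    then have "l + 1 \<le> k \<or> k + 2 \<le> l" by auto
    then have "\<bar>t - real l\<bar> \<ge> 1"
    proof
      assume "l + 1 \<le> k" then have "real l + 1 \<le> real k" by linarith
      then show ?thesis using k by linarith
    next
      assume "k + 2 \<le> l" then have "real k + 2 \<le> real l" by linarith
      then show ?thesis using k by linarith
    qed
    then show ?thesis using l by (simp add: Ref_def Nf_zero)
  next
    case False
    then obtain l where l: "j = 2*l+1" by (auto elim: oddE)
    have "l \<noteq> k" using j l by auto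
    then have "l + 1 \<le> k \<or> k + 1 \<le> l" by auto
    then have hh: "\<bar>t - real l - 1/2\<bar> \<ge> 1/2"
    proof
      assume "l + 1 \<le> k" then have "real l + 1 \<le> real k" by linarith
      then show ?thesis using k by linarith
    next
      assume "k + 1 \<le> l" then have "real k + 1 \<le> real l" by linarith
      then show ?thesis using k by linarith
    qed
    have eq: "t - real j / 2 = t - real l - 1/2" using l by (simp add: field_simps)
    have "\<bar>t - real j / 2\<bar> \<ge> 1/2" unfolding eq by (rule hh)
    then show ?thesis using False by (simp add: Ref_def Bf_zero)
  qed
  have "(\<Sum>j\<le>2*M. Ref j t) = (\<Sum>j\<in>?S. Ref j t)"
    by (rule sum.mono_neutral_right[OF _ sub]) (use zero in auto)
  also have "\<dots> = Ref (2*k) t + Ref (2*k+1) t + Ref (2*k+2) t" by simp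
  also have "\<dots> = 1"
  proof -
    define \<sigma> where "\<sigma> = t - real k"
    have s: "0 \<le> \<sigma>" "\<sigma> \<le> 1" using k by (auto simp: \<sigma>_def)
    have r1: "Ref (2*k) t = (1 - \<sigma>)*(1 - 2*\<sigma>)" using s by (simp add: Ref_def Nf_def \<sigma>_def)
    have r2: "Ref (2*k+1) t = (1 - 2*(\<sigma> - 1/2))*(1 + 2*(\<sigma> - 1/2))"
    proof -
      have "t - real (2*k+1) / 2 = \<sigma> - 1/2" by (simp add: \<sigma>_def field_simps)
      moreover have "\<bar>\<sigma> - 1/2\<bar> \<le> 1/2" using s by (auto simp: abs_if)
      ultimately show ?thesis by (simp add: Ref_def Bf_def)
    qed
    have r3: "Ref (2*k+2) t = (1 - (1 - \<sigma>))*(1 - 2*(1 - \<sigma>))"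
    proof -
      have "t - real (2*k+2) / 2 = \<sigma> - 1" by (simp add: \<sigma>_def field_simps)
      moreover have "\<bar>\<sigma> - 1\<bar> = 1 - \<sigma>" using s by auto
      ultimately show ?thesis using s by (simp add: Ref_def Nf_def)
    qed
    show ?thesis unfolding r1 r2 r3 by (simp add: algebra_simps)
  qed
  finally show ?thesis .
qed


lemma lin_cmp: "(h::real) > 0 \<Longrightarrow> (a + c*h \<le> a + t*h) = (c \<le> t)"
  by (simp add: mult_le_cancel_right)
lemma lin_cmp0: "(h::real) > 0 \<Longrightarrow> (a \<le> a + t*h) = (0 \<le> t)"
  by (simp add: zero_le_mult_iff)
lemma lin_div1: "(h::real) > 0 \<Longrightarrow> ((a + t*h) - (a + c*h))/h = t - c"
  by (simp add: field_simps)
lemma lin_div2: "(h::real) > 0 \<Longrightarrow> (2*(a + t*h) - ((a + c1*h) + (a + c2*h)))/h = 2*t - c1 - c2"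
  by (simp add: field_simps)
lemma lin_div3: "(h::real) > 0 \<Longrightarrow> ((a + c*h) - (a + t*h))/h = c - t"
  by (simp add: field_simps)
lemma lin_div4: "(h::real) > 0 \<Longrightarrow> (((a + c1*h) + (a + c2*h)) - 2*(a + t*h))/h = c1 + c2 - 2*t"
  by (simp add: field_simps)
lemma lin_div5: "(h::real) > 0 \<Longrightarrow> 4*((a + t*h) - (a + c1*h))*((a + c2*h) - (a + t*h))/h^2 = 4*(t - c1)*(c2 - t)"
  by (simp add: field_simps power2_eq_square)

lemma phi_eq:
  assumes ab: "a < b" and M: "M \<ge> 1" and y: "a \<le> y" "y \<le> b"
  shows "phi a b M j y = Ref j ((y - a) / ((b - a) / real M))"
proof -
  define h where "h = (b - a) / real M"
  have h: "h > 0" using ab M by (simp add: h_def)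
  define t where "t = (y - a) / h"
  have yt: "y = a + t * h" using h by (simp add: t_def)
  have bt: "b = a + real M * h" using M by (simp add: h_def)
  have xg: "\<And>k. xgrid a b M k = a + (real k / 2) * h" by (simp add: xgrid_def h_def)
  have t0: "0 \<le> t" "t \<le> real M" using y h by (auto simp: t_def divide_simps bt)
  have tb: "(a + t*h \<le> b) = (t \<le> real M)" using lin_cmp[OF h, of a t "real M"] bt by simp
  note L = lin_cmp[OF h] lin_cmp0[OF h] lin_div1[OF h] lin_div2[OF h] lin_div3[OF h] lin_div4[OF h] lin_div5[OF h]
  show ?thesis
  proof (cases "even j")
    case True
    then obtain l where l: "j = 2*l" by (auto elim: evenE)
    have "phi a b M j y =
      (if 1 \<le> l \<and> real (2*l - 2) / 2 \<le> t \<and> t \<le> real (2*l) / 2 \<and> 0 \<le> t \<and> t \<le> real M then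
          (t - real (2*l - 2) / 2) * (2*t - real (2*l) / 2 - real (2*l - 2) / 2)
        else if l < M \<and> real (2*l) / 2 \<le> t \<and> t \<le> real (2*l + 2) / 2 \<and> 0 \<le> t \<and> t \<le> real M then
          (real (2*l + 2) / 2 - t) * (real (2*l + 2) / 2 + real (2*l) / 2 - 2*t)
        else 0)"
      unfolding phi_def Let_def h_def[symmetric] xg l
      apply (simp only: even_mult_iff even_numeral simp_thms if_True nonzero_mult_div_cancel_left zero_neq_numeral)
      apply (simp only: yt)
      apply (simp only: L tb)
      done
    also have "\<dots> = Ref j t"
      using t0 M unfolding l Ref_def Nf_def
      by (cases "l = 0") (auto simp: of_nat_diff abs_if field_simps)
    finally show ?thesis by (simp add: t_def h_def)
  next
    case False
    then obtain l where l: "j = 2*l + 1" by (auto elim: oddE)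
    have jd: "(j + 1) div 2 = l + 1" using l by simp
    have "phi a b M j y =
      (if real (2*(l+1) - 2) / 2 \<le> t \<and> t \<le> real (2*(l+1)) / 2 then
          4*(t - real (2*(l+1) - 2) / 2) * (real (2*(l+1)) / 2 - t) else 0)"
      unfolding phi_def Let_def h_def[symmetric] xg jd
      using False
      apply (simp only: if_False)
      apply (simp only: yt)
      apply (simp only: L tb)
      done
    also have "\<dots> = Ref j t"
    proof -
      have e1: "real (2*(l+1) - 2) / 2 = real l" "real (2*(l+1)) / 2 = real l + 1" by simp_all
      have e3: "t - real j / 2 = t - real l - 1/2" using l by (simp add: field_simps)
      have cond: "(\<bar>t - real l - 1/2\<bar> \<le> 1/2) = (real l \<le> t \<and> t \<le> real l + 1)"
        by (auto simp: abs_if)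
      have val: "(1 - 2 * (t - real l - 1/2)) * (1 + 2 * (t - real l - 1/2)) = 4*(t - real l)*(real l + 1 - t)"
        by (simp add: algebra_simps)
      show ?thesis using False unfolding e1 Ref_def e3 Bf_def cond val by simp
    qed
    finally show ?thesis by (simp add: t_def h_def)
  qed
qed


lemma Wg_pow: "Wg \<gamma> t = \<bar>t\<bar> powr (- \<gamma>)"
  by (simp add: Wg_def powr_minus_divide)

lemma pow_shift:
  fixes x e \<gamma> :: real
  assumes g: "0 < \<gamma>" "\<gamma> < 1" and e: "x \<le> e"
  shows "((\<lambda>y. (y - x) powr (- \<gamma>)) has_integral (e - x) powr (1 - \<gamma>) / (1 - \<gamma>)) {x..e}"
proof -
  have R: "((\<lambda>z. z powr (- \<gamma>)) has_integral (e - x) powr (- \<gamma> + 1) / (- \<gamma> + 1)) {0..e - x}"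
    using g e by (intro has_integral_powr_from_0) auto
  have "(((\<lambda>y. (y - x) powr (- \<gamma>)) \<circ> (+) x) has_integral (e - x) powr (1 - \<gamma>) / (1 - \<gamma>)) {0..e - x}"
    using R by (simp add: o_def)
  then show ?thesis using has_integral_shift_Icc_real[of "\<lambda>y. (y - x) powr (- \<gamma>)" x _ 0 "e - x"]
    by simp
qed

lemma w_has_integral:
  fixes a b x \<gamma> :: real
  assumes g: "0 < \<gamma>" "\<gamma> < 1" and x: "a \<le> x" "x \<le> b"
  shows "((\<lambda>y. Wg \<gamma> (x - y)) has_integral ((x - a) powr (1 - \<gamma>) + (b - x) powr (1 - \<gamma>)) / (1 - \<gamma>)) {a..b}"
proof -
  have right: "((\<lambda>y. Wg \<gamma> (x - y)) has_integral (b - x) powr (1 - \<gamma>) / (1 - \<gamma>)) {x..b}"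
  proof -
    have R: "((\<lambda>y. (y - x) powr (- \<gamma>)) has_integral (b - x) powr (1 - \<gamma>) / (1 - \<gamma>)) {x..b}"
      by (rule pow_shift[OF g x(2)])
    have eq: "\<And>y. y \<in> {x..b} \<Longrightarrow> Wg \<gamma> (x - y) = (y - x) powr (- \<gamma>)"
      by (auto simp: Wg_pow abs_if)
    show ?thesis by (rule has_integral_cong[THEN iffD2, OF eq R])
  qed
  have left: "((\<lambda>y. Wg \<gamma> (x - y)) has_integral (x - a) powr (1 - \<gamma>) / (1 - \<gamma>)) {a..x}"
  proof -
    have "((\<lambda>y. (y - a) powr (- \<gamma>)) has_integral (x - a) powr (1 - \<gamma>) / (1 - \<gamma>)) {a..x}"
      by (rule pow_shift[OF g x(1)])
    then have R: "((\<lambda>y. (a + x - y - a) powr (- \<gamma>)) has_integral (x - a) powr (1 - \<gamma>) / (1 - \<gamma>)) {a..x}"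
      by (rule has_integral_reflect_Icc[where f = "\<lambda>y. (y - a) powr (- \<gamma>)"])
    have eq: "\<And>y. y \<in> {a..x} \<Longrightarrow> Wg \<gamma> (x - y) = (a + x - y - a) powr (- \<gamma>)"
      by (auto simp: Wg_pow abs_if)
    show ?thesis by (rule has_integral_cong[THEN iffD2, OF eq R])
  qed
  show ?thesis
    using has_integral_combine[OF x left right] by (simp add: add_divide_distrib)
qed

lemma w_integrable:
  fixes a b x \<gamma> :: real
  assumes g: "0 < \<gamma>" "\<gamma> < 1" and x: "a \<le> x" "x \<le> b"
  shows "(\<lambda>y. Wg \<gamma> (x - y)) integrable_on {a..b}"
  using has_integral_integrable[OF w_has_integral[OF assms]] .

lemma w_integral_bound:
  fixes a b x \<gamma> :: real
  assumes g: "0 < \<gamma>" "\<gamma> < 1" and x: "a \<le> x" "x \<le> b"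
  shows "integral {a..b} (\<lambda>y. Wg \<gamma> (x - y)) \<le> 2 * (b - a) powr (1 - \<gamma>) / (1 - \<gamma>)"
proof -
  have "(x - a) powr (1 - \<gamma>) \<le> (b - a) powr (1 - \<gamma>)" using g x by (intro powr_mono2) auto
  moreover have "(b - x) powr (1 - \<gamma>) \<le> (b - a) powr (1 - \<gamma>)" using g x by (intro powr_mono2) auto
  ultimately have "((x - a) powr (1 - \<gamma>) + (b - x) powr (1 - \<gamma>)) / (1 - \<gamma>) \<le> 2 * (b - a) powr (1 - \<gamma>) / (1 - \<gamma>)"
    using g by (intro divide_right_mono) auto
  then show ?thesis using integral_unique[OF w_has_integral[OF assms]] by simp
qed

lemma borel_to_leb: "f \<in> borel_measurable borel \<Longrightarrow> f \<in> borel_measurable (lebesgue_on S)"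
  by (simp add: measurable_completion measurable_restrict_space1)

lemma g_integrable:
  fixes a b x \<gamma> :: real
  assumes ab: "a < b" and M: "M \<ge> 1" and g: "0 < \<gamma>" "\<gamma> < 1" and x: "a \<le> x" "x \<le> b"
  shows "(\<lambda>y. phi a b M j y / \<bar>x - y\<bar> powr \<gamma>) integrable_on {a..b}"
proof (rule measurable_bounded_by_integrable_imp_integrable_real)
  show "(\<lambda>y. phi a b M j y / \<bar>x - y\<bar> powr \<gamma>) \<in> borel_measurable (lebesgue_on {a..b})"
    by (rule borel_to_leb) (unfold phi_def Let_def xgrid_def, measurable)
  show "(\<lambda>y. Wg \<gamma> (x - y)) integrable_on {a..b}" by (rule w_integrable[OF g x])
  show "{a..b} \<in> sets lebesgue" by simp
  fix y assume y: "y \<in> {a..b}"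
  have "\<bar>phi a b M j y\<bar> \<le> 1" using phi_eq[OF ab M, of y j] y Ref_bound by auto
  then have "\<bar>phi a b M j y\<bar> * Wg \<gamma> (x - y) \<le> 1 * Wg \<gamma> (x - y)"
    using Wg_nonneg by (intro mult_right_mono) auto
  then show "\<bar>phi a b M j y / \<bar>x - y\<bar> powr \<gamma>\<bar> \<le> Wg \<gamma> (x - y)"
    by (simp add: Wg_def abs_mult divide_inverse)
qed


lemma int_zero_left:
  fixes F :: "real \<Rightarrow> real"
  assumes "F integrable_on {\<alpha>..\<beta>}" "\<alpha> \<le> p" "p \<le> \<beta>" "\<forall>y\<in>{\<alpha>..p}. F y = 0"
  shows "integral {\<alpha>..\<beta>} F = integral {p..\<beta>} F"
proof -
  have "integral {\<alpha>..p} F = integral {\<alpha>..p} (\<lambda>y. 0)" using assms(4) by (intro integral_cong) auto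
  then have "integral {\<alpha>..p} F = 0" by simp
  then show ?thesis using Henstock_Kurzweil_Integration.integral_combine[OF assms(2,3,1)] by simp
qed

lemma int_zero_right:
  fixes F :: "real \<Rightarrow> real"
  assumes "F integrable_on {\<alpha>..\<beta>}" "\<alpha> \<le> p" "p \<le> \<beta>" "\<forall>y\<in>{p..\<beta>}. F y = 0"
  shows "integral {\<alpha>..\<beta>} F = integral {\<alpha>..p} F"
proof -
  have "integral {p..\<beta>} F = integral {p..\<beta>} (\<lambda>y. 0)" using assms(4) by (intro integral_cong) auto
  then have "integral {p..\<beta>} F = 0" by simp
  then show ?thesis using Henstock_Kurzweil_Integration.integral_combine[OF assms(2,3,1)] by simp
qed

lemma halfint_v:
  fixes i l :: nat
  shows "real i / 2 - real l \<le> 0 \<or> real i / 2 - real l = 1/2 \<or> real i / 2 - real l \<ge> 1"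
    and "real l - real i / 2 \<le> 0 \<or> real l - real i / 2 = 1/2 \<or> real l - real i / 2 \<ge> 1"
proof -
  have "i \<le> 2*l \<or> i = 2*l+1 \<or> i \<ge> 2*l+2" by auto
  then show "real i / 2 - real l \<le> 0 \<or> real i / 2 - real l = 1/2 \<or> real i / 2 - real l \<ge> 1"
  proof (elim disjE)
    assume "i \<le> 2*l" then have "real i \<le> 2 * real l" by linarith
    then show ?thesis by simp
  next
    assume "i = 2*l+1" then have "real i / 2 - real l = 1/2" by (simp add: field_simps)
    then show ?thesis by simp
  next
    assume "i \<ge> 2*l+2" then have "real i \<ge> 2 * real l + 2" by linarith
    then show ?thesis by simp
  qed
  have "2*l \<le> i \<or> 2*l = i+1 \<or> 2*l \<ge> i+2" by auto
  then show "real l - real i / 2 \<le> 0 \<or> real l - real i / 2 = 1/2 \<or> real l - real i / 2 \<ge> 1"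
  proof (elim disjE)
    assume "2*l \<le> i" then have "2 * real l \<le> real i" by linarith
    then show ?thesis by simp
  next
    assume "2*l = i+1" then have "2 * real l = real i + 1" by linarith
    then show ?thesis by simp
  next
    assume "2*l \<ge> i+2" then have "2 * real l \<ge> real i + 2" by linarith
    then show ?thesis by simp
  qed
qed

context
  fixes a b \<gamma> h :: real and M :: nat
  assumes ab: "a < b" and g0: "0 < \<gamma>" and g1: "\<gamma> < 1" and M1: "M \<ge> 1"
    and hdef: "h = (b - a) / real M"
begin

lemma hpos: "h > 0" using ab M1 by (simp add: hdef)
lemma xg: "xgrid a b M k = a + real k / 2 * h" by (simp add: xgrid_def hdef)
lemma bt: "b = a + real M * h" using M1 by (simp add: hdef)

lemma G_ref: "y \<in> {a..b} \<Longrightarrow> phi a b M j y / \<bar>x - y\<bar> powr \<gamma> = Ref j ((y - a) / h) * Wg \<gamma> (x - y)"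
  using phi_eq[OF ab M1, of y j] by (simp add: Wg_def hdef)


lemma elem_right:
  fixes l i :: nat and x :: real
  assumes l: "l < M" and x: "x = a + real i / 2 * h"
  defines "F \<equiv> \<lambda>y. phi a b M (2*l) y / \<bar>x - y\<bar> powr \<gamma>"
  shows "F integrable_on {a + real l * h .. a + real l * h + h} \<Longrightarrow>
           integral {a + real l * h .. a + real l * h + h} F \<ge> 0"
    and "F integrable_on {a + real l * h .. a + real l * h + h} \<Longrightarrow> 1 \<le> real i / 2 - real l \<Longrightarrow>
           real i / 2 - real l \<le> V \<Longrightarrow>
           integral {a + real l * h .. a + real l * h + h} F \<ge> 3/64 * (1 - theta \<gamma>) * \<bar>h\<bar> * Wg \<gamma> h * Wg \<gamma> V"
proof -
  define e0 where "e0 = a + real l * h"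
  have mm: "min e0 (e0 + h) = e0" "max e0 (e0 + h) = e0 + h" using hpos by auto
  have xv: "x = e0 + (real i / 2 - real l) * h" unfolding x e0_def by (simp add: algebra_simps)
  have G: "\<forall>y\<in>{min e0 (e0 + h)..max e0 (e0 + h)}. F y = qf ((y - e0) / h) * Wg \<gamma> (x - y)"
  proof
    fix y assume y: "y \<in> {min e0 (e0 + h)..max e0 (e0 + h)}"
    then have y1: "e0 \<le> y" "y \<le> e0 + h" unfolding mm by auto
    have "real l + 1 \<le> real M" using l by linarith
    then have "(real l + 1) * h \<le> real M * h" using hpos by (intro mult_right_mono) auto
    then have "e0 + h \<le> b" unfolding e0_def using bt by (simp add: algebra_simps)
    moreover have "a \<le> e0" unfolding e0_def using hpos by simp
    ultimately have yab: "y \<in> {a..b}" using y1 by auto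
    have tl: "(y - a) / h - real l = (y - e0) / h"
      unfolding e0_def using hpos by (simp add: field_simps)
    have u: "0 \<le> (y - e0) / h" "(y - e0) / h \<le> 1" using y1 hpos by (auto simp: divide_simps)
    have "Ref (2*l) ((y-a)/h) = Nf ((y - e0) / h)" unfolding Ref_def using tl by simp
    also have "\<dots> = qf ((y - e0) / h)"
    proof -
      have "\<bar>(y - e0) / h\<bar> = (y - e0) / h" using u by (simp only: abs_of_nonneg)
      then show ?thesis using u Nf_qf[of "(y - e0) / h"] by (simp only:)
    qed
    finally show "F y = qf ((y - e0) / h) * Wg \<gamma> (x - y)"
      unfolding F_def G_ref[OF yab] by simp
  qed
  note G' = G[unfolded mm]
  assume int: "F integrable_on {a + real l * h .. a + real l * h + h}"
  have int': "F integrable_on {min e0 (e0 + h)..max e0 (e0 + h)}" unfolding mm using int by (simp only: e0_def)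
  {
    have "integral {min e0 (e0 + h)..max e0 (e0 + h)} F \<ge> 0"
      by (rule half_nonneg[OF _ xv halfint_v(1) g0 g1 int' G]) (use hpos in simp)
    then show "integral {a + real l * h .. a + real l * h + h} F \<ge> 0" unfolding mm by (simp only: e0_def)
  }
  assume v: "1 \<le> real i / 2 - real l" "real i / 2 - real l \<le> V"
  have "integral {min e0 (e0 + h)..max e0 (e0 + h)} F \<ge> 3/64 * (1 - theta \<gamma>) * \<bar>h\<bar> * Wg \<gamma> h * Wg \<gamma> V"
    by (rule half_lower[OF _ xv v g0 g1 int' G]) (use hpos in simp)
  then show "integral {a + real l * h .. a + real l * h + h} F \<ge> 3/64 * (1 - theta \<gamma>) * \<bar>h\<bar> * Wg \<gamma> h * Wg \<gamma> V"
    unfolding mm by (simp only: e0_def)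
qed


lemma elem_left:
  fixes l i :: nat and x :: real
  assumes l: "1 \<le> l" "l \<le> M" and x: "x = a + real i / 2 * h"
  defines "F \<equiv> \<lambda>y. phi a b M (2*l) y / \<bar>x - y\<bar> powr \<gamma>"
  shows "F integrable_on {a + real l * h - h .. a + real l * h} \<Longrightarrow>
           integral {a + real l * h - h .. a + real l * h} F \<ge> 0"
    and "F integrable_on {a + real l * h - h .. a + real l * h} \<Longrightarrow> 1 \<le> real l - real i / 2 \<Longrightarrow>
           real l - real i / 2 \<le> V \<Longrightarrow>
           integral {a + real l * h - h .. a + real l * h} F \<ge> 3/64 * (1 - theta \<gamma>) * \<bar>-h\<bar> * Wg \<gamma> (-h) * Wg \<gamma> V"
proof -
  define e0 where "e0 = a + real l * h"
  have mm: "min e0 (e0 + - h) = e0 - h" "max e0 (e0 + - h) = e0" using hpos by auto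
  have xv: "x = e0 + (real l - real i / 2) * (- h)" unfolding x e0_def by (simp add: algebra_simps)
  have G: "\<forall>y\<in>{min e0 (e0 + - h)..max e0 (e0 + - h)}. F y = qf ((y - e0) / (- h)) * Wg \<gamma> (x - y)"
  proof
    fix y assume y: "y \<in> {min e0 (e0 + - h)..max e0 (e0 + - h)}"
    then have y1: "e0 - h \<le> y" "y \<le> e0" unfolding mm by auto
    have "real l \<le> real M" using l by linarith
    then have "real l * h \<le> real M * h" using hpos by (intro mult_right_mono) auto
    then have "e0 \<le> b" unfolding e0_def using bt by (simp add: algebra_simps)
    moreover have "(1::real) * h \<le> real l * h" using hpos l by (intro mult_right_mono) auto
    then have "a \<le> e0 - h" unfolding e0_def by simp
    ultimately have yab: "y \<in> {a..b}" using y1 by auto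
    have tl: "(y - a) / h - real l = - ((y - e0) / (- h))"
      unfolding e0_def using hpos by (simp add: field_simps)
    have u: "0 \<le> (y - e0) / (- h)" "(y - e0) / (- h) \<le> 1" using y1 hpos by (auto simp: divide_simps)
    have "Ref (2*l) ((y-a)/h) = Nf (- ((y - e0) / (- h)))" unfolding Ref_def using tl by simp
    also have "\<dots> = qf ((y - e0) / (- h))"
    proof -
      have "\<bar>- ((y - e0) / (- h))\<bar> = (y - e0) / (- h)" using u by (simp only: abs_minus_cancel abs_of_nonneg)
      then show ?thesis using u Nf_qf[of "- ((y - e0) / (- h))"] by (simp only:)
    qed
    finally show "F y = qf ((y - e0) / (- h)) * Wg \<gamma> (x - y)"
      unfolding F_def G_ref[OF yab] by simp
  qed
  assume int: "F integrable_on {a + real l * h - h .. a + real l * h}"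
  have int': "F integrable_on {min e0 (e0 + - h)..max e0 (e0 + - h)}" unfolding mm using int by (simp only: e0_def)
  {
    have "integral {min e0 (e0 + - h)..max e0 (e0 + - h)} F \<ge> 0"
      by (rule half_nonneg[OF _ xv halfint_v(2) g0 g1 int' G]) (use hpos in simp)
    then show "integral {a + real l * h - h .. a + real l * h} F \<ge> 0" unfolding mm by (simp only: e0_def)
  }
  assume v: "1 \<le> real l - real i / 2" "real l - real i / 2 \<le> V"
  have "integral {min e0 (e0 + - h)..max e0 (e0 + - h)} F \<ge> 3/64 * (1 - theta \<gamma>) * \<bar>-h\<bar> * Wg \<gamma> (-h) * Wg \<gamma> V"
    by (rule half_lower[OF _ xv v g0 g1 int' G]) (use hpos in simp)
  then show "integral {a + real l * h - h .. a + real l * h} F \<ge> 3/64 * (1 - theta \<gamma>) * \<bar>-h\<bar> * Wg \<gamma> (-h) * Wg \<gamma> V"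
    unfolding mm by (simp only: e0_def)
qed

lemma F_zero:
  assumes y: "y \<in> {a..b}" and d: "\<bar>(y - a) / h - real l\<bar> \<ge> 1"
  shows "phi a b M (2*l) y / \<bar>x - y\<bar> powr \<gamma> = 0"
  unfolding G_ref[OF y] Ref_def using Nf_zero[OF d] by simp

lemma xg_in: "i \<le> 2*M \<Longrightarrow> a \<le> a + real i / 2 * h \<and> a + real i / 2 * h \<le> b"
proof -
  assume i: "i \<le> 2*M"
  then have "real i / 2 \<le> real M" by linarith
  then have "real i / 2 * h \<le> real M * h" using hpos by (intro mult_right_mono) auto
  then show ?thesis using hpos bt by auto
qed

lemma g_nonneg:
  assumes i: "i \<le> 2*M" and j: "j \<le> 2*M"
  shows "gcoef a b \<gamma> M i j \<ge> 0"
proof -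
  define x where "x = a + real i / 2 * h"
  have xab: "a \<le> x" "x \<le> b" using xg_in[OF i] by (auto simp: x_def)
  define F where "F = (\<lambda>y. phi a b M j y / \<bar>x - y\<bar> powr \<gamma>)"
  have gF: "gcoef a b \<gamma> M i j = integral {a..b} F" by (simp add: gcoef_def F_def x_def xg)
  have Fint: "F integrable_on {a..b}" unfolding F_def by (rule g_integrable[OF ab M1 g0 g1 xab])
  show ?thesis
  proof (cases "even j")
    case False
    have "0 \<le> integral {a..b} F"
    proof (rule integral_nonneg[OF Fint])
      fix y assume y: "y \<in> {a..b}"
      show "0 \<le> F y" unfolding F_def G_ref[OF y] using Ref_odd_nonneg[OF False] Wg_nonneg by simp
    qed
    then show ?thesis using gF by simp
  next
    case True
    then obtain l where l: "j = 2*l" by (auto elim: evenE)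
    have lM: "l \<le> M" using j l by simp
    define m where "m = a + real l * h"
    have "real l * h \<le> real M * h" using hpos lM by (intro mult_right_mono) auto
    then have mab: "a \<le> m" "m \<le> b" using hpos bt by (auto simp: m_def)
    have split: "integral {a..b} F = integral {a..m} F + integral {m..b} F"
      using Henstock_Kurzweil_Integration.integral_combine[OF mab Fint] by simp
    have L: "integral {a..m} F \<ge> 0"
    proof (cases "l = 0")
      case True then show ?thesis by (simp add: m_def)
    next
      case False
      then have l1: "1 \<le> l" by simp
      have "(1::real) * h \<le> real l * h" using hpos l1 by (intro mult_right_mono) auto
      then have pm: "a \<le> m - h" "m - h \<le> m" using hpos by (auto simp: m_def)
      have Fint2: "F integrable_on {a..m}" by (rule integrable_on_subinterval[OF Fint]) (use mab in auto)
      have "integral {a..m} F = integral {m - h..m} F"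
      proof (rule int_zero_left[OF Fint2 pm])
        show "\<forall>y\<in>{a..m - h}. F y = 0"
        proof
          fix y assume y: "y \<in> {a..m - h}"
          then have yab: "y \<in> {a..b}" using mab pm by auto
          have "(y - a) / h \<le> real l - 1" using y hpos by (simp add: divide_simps m_def algebra_simps)
          then have "\<bar>(y - a) / h - real l\<bar> \<ge> 1" by simp
          then show "F y = 0" unfolding F_def l by (rule F_zero[OF yab])
        qed
      qed
      moreover have "integral {m - h..m} F \<ge> 0"
      proof -
        have "F integrable_on {a + real l * h - h .. a + real l * h}"
          by (rule integrable_on_subinterval[OF Fint]) (use pm mab in \<open>auto simp: m_def\<close>)
        from elem_left(1)[OF l1 lM x_def this[unfolded F_def l]]
        show ?thesis by (simp add: m_def F_def l)
      qed
      ultimately show ?thesis by simp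
    qed
    have R: "integral {m..b} F \<ge> 0"
    proof (cases "l = M")
      case True then have "m = b" using bt by (simp add: m_def)
      then show ?thesis by simp
    next
      case False
      then have l1: "l < M" using lM by simp
      have "(real l + 1) * h \<le> real M * h" using hpos l1 by (intro mult_right_mono) auto
      then have pm: "m \<le> m + h" "m + h \<le> b" using hpos bt by (auto simp: m_def algebra_simps)
      have Fint2: "F integrable_on {m..b}" by (rule integrable_on_subinterval[OF Fint]) (use mab in auto)
      have "integral {m..b} F = integral {m..m + h} F"
      proof (rule int_zero_right[OF Fint2 pm])
        show "\<forall>y\<in>{m + h..b}. F y = 0"
        proof
          fix y assume y: "y \<in> {m + h..b}"
          then have yab: "y \<in> {a..b}" using mab pm by auto
          have "(y - a) / h \<ge> real l + 1" using y hpos by (simp add: divide_simps m_def algebra_simps)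
          then have "\<bar>(y - a) / h - real l\<bar> \<ge> 1" by simp
          then show "F y = 0" unfolding F_def l by (rule F_zero[OF yab])
        qed
      qed
      moreover have "integral {m..m + h} F \<ge> 0"
      proof -
        have "F integrable_on {a + real l * h .. a + real l * h + h}"
          by (rule integrable_on_subinterval[OF Fint]) (use pm mab in \<open>auto simp: m_def\<close>)
        from elem_right(1)[OF l1 x_def this[unfolded F_def l]]
        show ?thesis by (simp add: m_def F_def l)
      qed
      ultimately show ?thesis by simp
    qed
    show ?thesis using gF split L R by simp
  qed
qed


lemma g_margin:
  assumes M2: "M \<ge> 2" and i: "1 \<le> i" "i \<le> 2*M - 1"
  shows "gcoef a b \<gamma> M i 0 + gcoef a b \<gamma> M i (2*M) \<ge> 3/64 * (1 - theta \<gamma>) * h * Wg \<gamma> h * Wg \<gamma> (real M)"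
proof -
  define x where "x = a + real i / 2 * h"
  have i2: "i \<le> 2*M" using i by simp
  have xab: "a \<le> x" "x \<le> b" using xg_in[OF i2] by (auto simp: x_def)
  have g0n: "gcoef a b \<gamma> M i 0 \<ge> 0" and g2n: "gcoef a b \<gamma> M i (2*M) \<ge> 0"
    using g_nonneg[OF i2] by auto
  have hW: "Wg \<gamma> (-h) = Wg \<gamma> h" by (simp add: Wg_def)
  show ?thesis
  proof (cases "2 \<le> i")
    case True
    define F where "F = (\<lambda>y. phi a b M (2*0) y / \<bar>x - y\<bar> powr \<gamma>)"
    have gF: "gcoef a b \<gamma> M i 0 = integral {a..b} F" by (simp add: gcoef_def F_def x_def xg)
    have Fint: "F integrable_on {a..b}" unfolding F_def by (rule g_integrable[OF ab M1 g0 g1 xab])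
    have "(1::real) * h \<le> real M * h" using hpos M1 by (intro mult_right_mono) auto
    then have pm: "a \<le> a + h" "a + h \<le> b" using hpos bt by auto
    have "integral {a..b} F = integral {a..a + h} F"
    proof (rule int_zero_right[OF Fint pm])
      show "\<forall>y\<in>{a + h..b}. F y = 0"
      proof
        fix y assume y: "y \<in> {a + h..b}"
        then have yab: "y \<in> {a..b}" using pm by auto
        have "(y - a) / h \<ge> 1" using y hpos by (simp add: divide_simps)
        then have "\<bar>(y - a) / h - real 0\<bar> \<ge> 1" by (simp only: of_nat_0 diff_zero)
        then show "F y = 0" unfolding F_def by (rule F_zero[OF yab])
      qed
    qed
    moreover have "integral {a..a + h} F \<ge> 3/64 * (1 - theta \<gamma>) * \<bar>h\<bar> * Wg \<gamma> h * Wg \<gamma> (real M)"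
    proof -
      have "F integrable_on {a + real 0 * h .. a + real 0 * h + h}"
        by (rule integrable_on_subinterval[OF Fint]) (use pm in auto)
      moreover have "1 \<le> real i / 2 - real 0" "real i / 2 - real 0 \<le> real M" using True i2 by auto
      ultimately show ?thesis using elem_right(2)[OF M1[unfolded One_nat_def Suc_le_eq] x_def, of "real M"]
        unfolding F_def by simp
    qed
    ultimately have "gcoef a b \<gamma> M i 0 \<ge> 3/64 * (1 - theta \<gamma>) * h * Wg \<gamma> h * Wg \<gamma> (real M)"
      using gF hpos by simp
    then show ?thesis using g2n by linarith
  next
    case False
    then have i1: "i = 1" using i by simp
    define F where "F = (\<lambda>y. phi a b M (2*M) y / \<bar>x - y\<bar> powr \<gamma>)"
    have gF: "gcoef a b \<gamma> M i (2*M) = integral {a..b} F" by (simp add: gcoef_def F_def x_def xg)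
    have Fint: "F integrable_on {a..b}" unfolding F_def by (rule g_integrable[OF ab M1 g0 g1 xab])
    have "(1::real) * h \<le> real M * h" using hpos M1 by (intro mult_right_mono) auto
    then have pm: "a \<le> b - h" "b - h \<le> b" using hpos bt by auto
    have "integral {a..b} F = integral {b - h..b} F"
    proof (rule int_zero_left[OF Fint pm])
      show "\<forall>y\<in>{a..b - h}. F y = 0"
      proof
        fix y assume y: "y \<in> {a..b - h}"
        then have yab: "y \<in> {a..b}" using pm by auto
        have "(y - a) / h \<le> real M - 1" using y hpos bt by (simp add: divide_simps algebra_simps)
        then have "\<bar>(y - a) / h - real M\<bar> \<ge> 1" by simp
        then show "F y = 0" unfolding F_def by (rule F_zero[OF yab])
      qed
    qed
    moreover have "integral {b - h..b} F \<ge> 3/64 * (1 - theta \<gamma>) * \<bar>-h\<bar> * Wg \<gamma> (-h) * Wg \<gamma> (real M)"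
    proof -
      have e: "a + real M * h - h = b - h" "a + real M * h = b" using bt by auto
      have "F integrable_on {a + real M * h - h .. a + real M * h}"
        unfolding e by (rule integrable_on_subinterval[OF Fint]) (use pm in auto)
      moreover have "1 \<le> real M - real i / 2" "real M - real i / 2 \<le> real M" using i1 M2 by auto
      ultimately have "integral {a + real M * h - h .. a + real M * h} F
           \<ge> 3/64 * (1 - theta \<gamma>) * \<bar>-h\<bar> * Wg \<gamma> (-h) * Wg \<gamma> (real M)"
        using elem_left(2)[OF M1 order_refl x_def, of "real M"] unfolding F_def by simp
      then show ?thesis unfolding e .
    qed
    ultimately have "gcoef a b \<gamma> M i (2*M) \<ge> 3/64 * (1 - theta \<gamma>) * h * Wg \<gamma> h * Wg \<gamma> (real M)"
      using gF hpos hW by simp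
    then show ?thesis using g0n by linarith
  qed
qed

lemma g_sum:
  assumes i: "i \<le> 2*M"
  shows "(\<Sum>j\<le>2*M. gcoef a b \<gamma> M i j) = dcoef a b \<gamma> M i"
proof -
  define x where "x = a + real i / 2 * h"
  have xab: "a \<le> x" "x \<le> b" using xg_in[OF i] by (auto simp: x_def)
  have "(\<Sum>j\<le>2*M. gcoef a b \<gamma> M i j) = (\<Sum>j\<le>2*M. integral {a..b} (\<lambda>y. phi a b M j y / \<bar>x - y\<bar> powr \<gamma>))"
    by (simp add: gcoef_def x_def xg)
  also have "\<dots> = integral {a..b} (\<lambda>y. \<Sum>j\<le>2*M. phi a b M j y / \<bar>x - y\<bar> powr \<gamma>)"
    by (rule integral_sum[symmetric]) (auto intro: g_integrable[OF ab M1 g0 g1 xab])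
  also have "\<dots> = integral {a..b} (\<lambda>y. 1 / \<bar>x - y\<bar> powr \<gamma>)"
  proof (rule integral_cong)
    fix y assume y: "y \<in> {a..b}"
    have t: "0 \<le> (y - a) / h" "(y - a) / h \<le> real M" using y hpos bt by (auto simp: divide_simps algebra_simps)
    have "(\<Sum>j\<le>2*M. phi a b M j y / \<bar>x - y\<bar> powr \<gamma>) = (\<Sum>j\<le>2*M. phi a b M j y) / \<bar>x - y\<bar> powr \<gamma>"
      by (simp add: sum_divide_distrib)
    also have "(\<Sum>j\<le>2*M. phi a b M j y) = (\<Sum>j\<le>2*M. Ref j ((y - a) / h))"
      using phi_eq[OF ab M1] y by (simp add: hdef)
    also have "\<dots> = 1" by (rule Ref_PU[OF M1 t])
    finally show "(\<Sum>j\<le>2*M. phi a b M j y / \<bar>x - y\<bar> powr \<gamma>) = 1 / \<bar>x - y\<bar> powr \<gamma>" .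
  qed
  also have "\<dots> = dcoef a b \<gamma> M i" by (simp add: dcoef_def x_def xg)
  finally show ?thesis .
qed

lemma d_bound:
  assumes i: "i \<le> 2*M"
  shows "dcoef a b \<gamma> M i \<le> 2 * (b - a) powr (1 - \<gamma>) / (1 - \<gamma>)"
proof -
  define x where "x = a + real i / 2 * h"
  have xab: "a \<le> x" "x \<le> b" using xg_in[OF i] by (auto simp: x_def)
  have "dcoef a b \<gamma> M i = integral {a..b} (\<lambda>y. Wg \<gamma> (x - y))"
    by (simp add: dcoef_def x_def xg Wg_def)
  then show ?thesis using w_integral_bound[OF g0 g1 xab] by simp
qed

end


lemma mult_vec_sum:
  assumes "A \<in> carrier_mat n n" "v \<in> carrier_vec n" "m < n"
  shows "(A *\<^sub>v v) $ m = (\<Sum>c<n. A $$ (m,c) * v $ c)"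
  using assms by (auto simp: scalar_prod_def atLeast0LessThan intro!: sum.cong)

lemma sdd_bound:
  fixes A :: "real mat"
  assumes A: "A \<in> carrier_mat n n" and v: "v \<in> carrier_vec n" and dpos: "\<delta> > 0"
  and dom: "\<forall>r<n. (\<Sum>c\<in>{..<n}-{r}. \<bar>A$$(r,c)\<bar>) + \<delta> \<le> \<bar>A$$(r,r)\<bar>"
  and bnd: "\<forall>m<n. \<bar>(A *\<^sub>v v) $ m\<bar> \<le> \<beta>"
  and k: "k < n"
  shows "\<bar>v $ k\<bar> \<le> \<beta> / \<delta>"
proof -
  let ?S = "(\<lambda>k. \<bar>v$k\<bar>) ` {..<n}"
  have fin: "finite ?S" "?S \<noteq> {}" using k by auto
  obtain m where m: "m < n" "\<bar>v$m\<bar> = Max ?S" using Max_in[OF fin] by auto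
  have mx: "\<And>c. c < n \<Longrightarrow> \<bar>v$c\<bar> \<le> \<bar>v$m\<bar>" using m fin by auto
  have split: "(\<Sum>c<n. A $$ (m,c) * v $ c) = A$$(m,m) * v$m + (\<Sum>c\<in>{..<n}-{m}. A $$ (m,c) * v $ c)"
    using m(1) by (subst sum.remove[of _ m]) auto
  have "\<bar>\<Sum>c\<in>{..<n}-{m}. A $$ (m,c) * v $ c\<bar> \<le> (\<Sum>c\<in>{..<n}-{m}. \<bar>A $$ (m,c)\<bar> * \<bar>v $ m\<bar>)"
    by (rule order_trans[OF sum_abs], rule sum_mono) (auto simp: abs_mult intro!: mult_left_mono mx)
  also have "\<dots> = (\<Sum>c\<in>{..<n}-{m}. \<bar>A $$ (m,c)\<bar>) * \<bar>v $ m\<bar>" by (simp add: sum_distrib_right)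
  finally have r: "\<bar>\<Sum>c\<in>{..<n}-{m}. A $$ (m,c) * v $ c\<bar> \<le> (\<Sum>c\<in>{..<n}-{m}. \<bar>A $$ (m,c)\<bar>) * \<bar>v $ m\<bar>" .
  have "\<delta> * \<bar>v$m\<bar> \<le> (\<bar>A$$(m,m)\<bar> - (\<Sum>c\<in>{..<n}-{m}. \<bar>A$$(m,c)\<bar>)) * \<bar>v$m\<bar>"
    using dom m(1) by (intro mult_right_mono) auto
  also have "\<dots> \<le> \<bar>A$$(m,m) * v$m\<bar> - \<bar>\<Sum>c\<in>{..<n}-{m}. A $$ (m,c) * v $ c\<bar>"
    using r by (simp add: abs_mult algebra_simps)
  also have "\<dots> \<le> \<bar>(A *\<^sub>v v) $ m\<bar>"
    unfolding mult_vec_sum[OF A v m(1)] split by linarith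
  also have "\<dots> \<le> \<beta>" using bnd m by auto
  finally have "\<delta> * \<bar>v$m\<bar> \<le> \<beta>" .
  then have "\<bar>v$m\<bar> \<le> \<beta> / \<delta>" using dpos by (simp add: field_simps)
  then show ?thesis using mx[OF k] by linarith
qed

lemma sdd_inverse:
  fixes A :: "real mat"
  assumes A: "A \<in> carrier_mat n n" and n: "n > 0" and dpos: "\<delta> > 0"
  and dom: "\<forall>r<n. (\<Sum>c\<in>{..<n}-{r}. \<bar>A$$(r,c)\<bar>) + \<delta> \<le> \<bar>A$$(r,r)\<bar>"
  shows "norm_inf_mat (inverse_mat A) \<le> 1/\<delta>"
proof -
  have "det A \<noteq> 0"
  proof
    assume "det A = 0"
    then obtain v where v: "v \<in> carrier_vec n" "v \<noteq> 0\<^sub>v n" "A *\<^sub>v v = 0\<^sub>v n"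
      using det_0_iff_vec_prod_zero_field[OF A] by auto
    have "\<forall>k<n. \<bar>v$k\<bar> \<le> 0 / \<delta>"
      using sdd_bound[OF A v(1) dpos dom, of 0] v(3) by auto
    then have "v = 0\<^sub>v n" using v(1) by (intro eq_vecI) auto
    then show False using v(2) by simp
  qed
  from det_non_zero_imp_unit[OF A this, of "()"]
  have "\<exists>B. B \<in> carrier_mat n n \<and> A * B = 1\<^sub>m n \<and> B * A = 1\<^sub>m n"
    unfolding Units_def ring_mat_def by auto
  then have "inverse_mat A \<in> carrier_mat n n \<and> A * inverse_mat A = 1\<^sub>m n"
    unfolding inverse_mat_def using A by (smt (verit, del_insts) carrier_matD(1) someI_ex)
  then have B: "inverse_mat A \<in> carrier_mat n n" and AB: "A * inverse_mat A = 1\<^sub>m n" by auto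
  define B where "B = inverse_mat A"
  have rows: "(\<Sum>c<n. \<bar>B $$ (r, c)\<bar>) \<le> 1/\<delta>" if r: "r < n" for r
  proof -
    define y where "y = vec n (\<lambda>c. sgn (B $$ (r,c)))"
    define x where "x = B *\<^sub>v y"
    have y: "y \<in> carrier_vec n" by (simp add: y_def)
    have x: "x \<in> carrier_vec n" using B y by (simp add: x_def B_def mult_mat_vec_carrier)
    have "A *\<^sub>v x = y"
      unfolding x_def B_def using A B y AB
      by (metis assoc_mult_mat_vec one_mult_mat_vec)
    then have bnd: "\<forall>m<n. \<bar>(A *\<^sub>v x) $ m\<bar> \<le> 1" by (auto simp: y_def abs_sgn_eq)
    have "\<bar>x $ r\<bar> \<le> 1/\<delta>" using sdd_bound[OF A x dpos dom bnd r] .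
    moreover have "x $ r = (\<Sum>c<n. B $$ (r, c) * sgn (B $$ (r, c)))"
      unfolding x_def using mult_vec_sum[OF B[folded B_def] y r]
      by (simp add: y_def)
    moreover have "\<dots> = (\<Sum>c<n. \<bar>B $$ (r, c)\<bar>)"
      by (rule sum.cong) (auto simp: sgn_if)
    ultimately show ?thesis by simp
  qed
  have "norm_inf_mat B \<le> 1/\<delta>"
    unfolding norm_inf_mat_def using B[folded B_def] n rows
    by (subst Max_le_iff) auto
  then show ?thesis by (simp add: B_def)
qed


theorem lemma3p5:
  fixes a b \<gamma> :: real
  assumes "a < b" and "0 < \<gamma>" and "\<gamma> < 1"
  shows "\<exists>C. \<forall>M::nat. M \<ge> 2 \<longrightarrow> cond_inf (colloc_mat a b \<gamma> M) \<le> C * real M"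
proof -
  note ab = assms(1) and g0 = assms(2) and g1 = assms(3)
  define D where "D = 2 * (b - a) powr (1 - \<gamma>) / (1 - \<gamma>)"
  define \<kappa> where "\<kappa> = 3/64 * (1 - theta \<gamma>)"
  have \<kappa>: "\<kappa> > 0" using theta_bounds[OF g0 g1] by (simp add: \<kappa>_def)
  have Wba: "Wg \<gamma> (b - a) > 0" using ab by (simp add: Wg_def)
  have Dnn: "D \<ge> 0" using g1 by (simp add: D_def)
  define C where "C = 2 * D / (\<kappa> * Wg \<gamma> (b - a) * (b - a))"
  show ?thesis
  proof (intro exI allI impI)
    fix M :: nat assume M2: "M \<ge> 2"
    have M1: "M \<ge> 1" using M2 by simp
    define h where "h = (b - a) / real M"
    have hpos: "h > 0" using ab M1 by (simp add: h_def)
    define \<delta> where "\<delta> = \<kappa> * h * Wg \<gamma> h * Wg \<gamma> (real M)"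
    have \<delta>eq: "\<delta> = \<kappa> * Wg \<gamma> (b - a) * (b - a) / real M"
    proof -
      have "Wg \<gamma> h * Wg \<gamma> (real M) = Wg \<gamma> (b - a)"
        unfolding Wg_mult[symmetric] using M1 by (simp add: h_def)
      then show ?thesis unfolding \<delta>_def by (simp add: h_def mult.assoc)
    qed
    have \<delta>pos: "\<delta> > 0" unfolding \<delta>eq using \<kappa> Wba ab M1 by simp
    define n where "n = 2*M - 1"
    have n2: "2*M = Suc n" using M1 by (simp add: n_def)
    define A where "A = colloc_mat a b \<gamma> M"
    have A: "A \<in> carrier_mat n n" by (simp add: A_def colloc_mat_def n_def)
    have Aent: "A $$ (r, c) = (if r = c then dcoef a b \<gamma> M (r+1) else 0) - gcoef a b \<gamma> M (r+1) (c+1)"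
      if "r < n" "c < n" for r c
      using that by (simp add: A_def colloc_mat_def n_def)
    have npos: "n > 0" using M2 by (simp add: n_def)
    note gnn = g_nonneg[OF ab g0 g1 M1 h_def]
    have rowfacts: "(\<Sum>c\<in>{..<n}-{r}. \<bar>A$$(r,c)\<bar>) + \<delta> \<le> \<bar>A$$(r,r)\<bar>
        \<and> (\<Sum>c<n. \<bar>A$$(r,c)\<bar>) \<le> 2 * D" if r: "r < n" for r
    proof -
      define i where "i = r + 1"
      have i: "1 \<le> i" "i \<le> 2*M - 1" using r by (auto simp: i_def n_def)
      have i2: "i \<le> 2*M" using i by simp
      let ?g = "gcoef a b \<gamma> M i"
      have sumid: "(\<Sum>j\<le>2*M. ?g j) = ?g 0 + (\<Sum>c<n. ?g (c+1)) + ?g (2*M)"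
        unfolding n2 sum.atMost_Suc_shift by (simp add: lessThan_Suc_atMost[symmetric])
      have rem: "(\<Sum>c<n. ?g (c+1)) = ?g i + (\<Sum>c\<in>{..<n}-{r}. ?g (c+1))"
        using r by (simp add: sum.remove[of "{..<n}" r] i_def)
      have offd: "(\<Sum>c\<in>{..<n}-{r}. \<bar>A$$(r,c)\<bar>) = (\<Sum>c\<in>{..<n}-{r}. ?g (c+1))"
      proof (rule sum.cong)
        fix c assume c: "c \<in> {..<n}-{r}"
        have "c + 1 \<le> 2*M" using c by (auto simp: n_def)
        then show "\<bar>A$$(r,c)\<bar> = ?g (c+1)" using c r gnn[OF i2] by (simp add: Aent i_def)
      qed simp
      have diag: "A$$(r,r) = dcoef a b \<gamma> M i - ?g i" using r by (simp add: Aent i_def)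
      have dsum: "dcoef a b \<gamma> M i = ?g 0 + ?g i + (\<Sum>c\<in>{..<n}-{r}. ?g (c+1)) + ?g (2*M)"
        using g_sum[OF ab g0 g1 M1 h_def i2] sumid rem by simp
      have marg: "?g 0 + ?g (2*M) \<ge> \<delta>"
        using g_margin[OF ab g0 g1 M1 h_def M2 i] by (simp add: \<delta>_def \<kappa>_def mult.assoc)
      have onn: "(\<Sum>c\<in>{..<n}-{r}. ?g (c+1)) \<ge> 0"
        by (rule sum_nonneg) (use gnn[OF i2] in \<open>auto simp: n_def\<close>)
      have Arr: "A$$(r,r) = ?g 0 + ?g (2*M) + (\<Sum>c\<in>{..<n}-{r}. ?g (c+1))"
        using diag dsum by simp
      have Arrpos: "A$$(r,r) \<ge> 0" using Arr marg onn \<delta>pos by linarith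
      have part1: "(\<Sum>c\<in>{..<n}-{r}. \<bar>A$$(r,c)\<bar>) + \<delta> \<le> \<bar>A$$(r,r)\<bar>"
        using offd Arr marg Arrpos by simp
      have rowsum: "(\<Sum>c<n. \<bar>A$$(r,c)\<bar>) = \<bar>A$$(r,r)\<bar> + (\<Sum>c\<in>{..<n}-{r}. \<bar>A$$(r,c)\<bar>)"
        using r by (simp add: sum.remove[of "{..<n}" r])
      have gii: "?g i \<ge> 0" using gnn[OF i2 i2] .
      have "dcoef a b \<gamma> M i \<le> D" using d_bound[OF ab g0 g1 M1 h_def i2] by (simp add: D_def)
      then have part2: "(\<Sum>c<n. \<bar>A$$(r,c)\<bar>) \<le> 2 * D"
        using rowsum offd Arr Arrpos diag gii marg \<delta>pos by simp
      show ?thesis using part1 part2 by simp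
    qed
    have dom: "\<forall>r<n. (\<Sum>c\<in>{..<n}-{r}. \<bar>A$$(r,c)\<bar>) + \<delta> \<le> \<bar>A$$(r,r)\<bar>" using rowfacts by blast
    have invb: "norm_inf_mat (inverse_mat A) \<le> 1/\<delta>" by (rule sdd_inverse[OF A npos \<delta>pos dom])
    have dimA: "dim_row A = n" "dim_col A = n" using A by auto
    have nA: "norm_inf_mat A \<le> 2 * D"
      unfolding norm_inf_mat_def dimA using npos rowfacts by (subst Max_le_iff) auto
    have nA0: "norm_inf_mat A \<ge> 0"
    proof -
      have "(\<Sum>c<n. \<bar>A$$(0,c)\<bar>) \<le> norm_inf_mat A"
        unfolding norm_inf_mat_def dimA using npos by (intro Max_ge) auto
      moreover have "(\<Sum>c<n. \<bar>A$$(0,c)\<bar>) \<ge> 0" by (rule sum_nonneg) auto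
      ultimately show ?thesis by linarith
    qed
    have "cond_inf A = norm_inf_mat A * norm_inf_mat (inverse_mat A)" by (simp add: cond_inf_def)
    also have "\<dots> \<le> norm_inf_mat A * (1/\<delta>)" using invb nA0 by (intro mult_left_mono) auto
    also have "\<dots> \<le> 2 * D * (1/\<delta>)" using nA \<delta>pos by (intro mult_right_mono) auto
    also have "\<dots> = C * real M" unfolding \<delta>eq C_def using M1 \<kappa> Wba ab by (simp add: field_simps)
    finally show "cond_inf (colloc_mat a b \<gamma> M) \<le> C * real M" by (simp add: A_def)
  qed
qed


end
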